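(* Let $n\geq 2$ and $\alpha_2,\dots,\alpha_n\in\mathbb{C}$ with $\alpha_2\neq 0$. Then the transposed Poisson algebra $\mathbf{TP}(\alpha_2,\dots,\alpha_n)$ is isomorphic to $\mathbf{TP}(1,0,\dots,0)$, i.e. to $\mu_0^n$ with $e_i\cdot e_j=e_{i+j}$ ($2\leq i+j\leq n$) and $[e_i,e_j]=(j-i)e_{i+j-1}$ ($3\leq i+j\leq n+1$).
   Context: $\mu_0^n$ is the complex commutative associative algebra with basis $\{e_1,\dots,e_n\}$ and $e_i\cdot e_j=e_{i+j}$ for $2\leq i+j\leq n$, other products zero. For $\alpha_2,\dots,\alpha_n\in\mathbb{C}$, $\mathbf{TP}(\alpha_2,\dots,\alpha_n)$ denotes $\mu_0^n$ with its associative product together with the bracket $[e_i,e_j]=(j-i)\sum_{t=i+j-1}^{n}\alpha_{t-i-j+3}e_t$ for $3\leq i+j\leq n+1$, other brackets of basis elements zero. Isomorphisms are linear bijections preserving both operations. *)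

theory Defs
  imports Complex_Main
begin

text \<open>Elements of the n-dimensional algebra with basis e_1,...,e_n are represented by
  their coordinate functions x :: nat \<Rightarrow> complex, where x t is the coefficient of e_t;
  coordinates outside {1..n} are required to vanish.\<close>

definition carrierV :: "nat \<Rightarrow> (nat \<Rightarrow> complex) set" where
  "carrierV n = {x. \<forall>t. t \<notin> {1..n} \<longrightarrow> x t = 0}"

definition mu0_mult :: "nat \<Rightarrow> (nat \<Rightarrow> complex) \<Rightarrow> (nat \<Rightarrow> complex) \<Rightarrow> (nat \<Rightarrow> complex)" where
  "mu0_mult n x y = (\<lambda>t. \<Sum>i\<in>{1..n}. \<Sum>j\<in>{1..n}.
      if i + j \<le> n \<and> t = i + j then x i * y j else 0)"

text \<open>Only the values alpha 2, ..., alpha n are used.\<close>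
definition TP_bracket :: "nat \<Rightarrow> (nat \<Rightarrow> complex) \<Rightarrow> (nat \<Rightarrow> complex) \<Rightarrow> (nat \<Rightarrow> complex) \<Rightarrow> (nat \<Rightarrow> complex)" where
  "TP_bracket n \<alpha> x y = (\<lambda>t. \<Sum>i\<in>{1..n}. \<Sum>j\<in>{1..n}.
      if 3 \<le> i + j \<and> i + j \<le> n + 1 \<and> i + j - 1 \<le> t \<and> t \<le> n
      then (of_int (int j - int i)) * \<alpha> (t + 3 - (i + j)) * x i * y j else 0)"

definition TP_iso :: "nat \<Rightarrow> (nat \<Rightarrow> complex) \<Rightarrow> (nat \<Rightarrow> complex) \<Rightarrow>
    ((nat \<Rightarrow> complex) \<Rightarrow> (nat \<Rightarrow> complex)) \<Rightarrow> bool" where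
  "TP_iso n \<alpha> \<beta> \<phi> \<longleftrightarrow>
     bij_betw \<phi> (carrierV n) (carrierV n) \<and>
     (\<forall>x\<in>carrierV n. \<forall>y\<in>carrierV n. \<phi> (\<lambda>t. x t + y t) = (\<lambda>t. \<phi> x t + \<phi> y t)) \<and>
     (\<forall>c. \<forall>x\<in>carrierV n. \<phi> (\<lambda>t. c * x t) = (\<lambda>t. c * \<phi> x t)) \<and>
     (\<forall>x\<in>carrierV n. \<forall>y\<in>carrierV n. \<phi> (mu0_mult n x y) = mu0_mult n (\<phi> x) (\<phi> y)) \<and>
     (\<forall>x\<in>carrierV n. \<forall>y\<in>carrierV n. \<phi> (TP_bracket n \<alpha> x y) = TP_bracket n \<beta> (\<phi> x) (\<phi> y))"

definition TP_isomorphic :: "nat \<Rightarrow> (nat \<Rightarrow> complex) \<Rightarrow> (nat \<Rightarrow> complex) \<Rightarrow> bool" where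
  "TP_isomorphic n \<alpha> \<beta> \<longleftrightarrow> (\<exists>\<phi>. TP_iso n \<alpha> \<beta> \<phi>)"

end

theory Submission
  imports Defs "HOL-Computational_Algebra.Formal_Power_Series"
begin
unbundle fps_syntax

definition Wr :: "complex fps \<Rightarrow> complex fps \<Rightarrow> complex fps" where
  "Wr f g = f * fps_deriv g - fps_deriv f * g"

definition feq :: "nat \<Rightarrow> complex fps \<Rightarrow> complex fps \<Rightarrow> bool" where
  "feq n f g \<longleftrightarrow> (\<forall>k\<le>n. f $ k = g $ k)"

lemma feq_compose: "feq n f g \<Longrightarrow> feq n (f oo s) (g oo s)"
  unfolding feq_def fps_compose_nth by (auto intro!: sum.cong)

lemma feq_mult: "feq n f g \<Longrightarrow> feq n f' g' \<Longrightarrow> feq n (f * f') (g * g')"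
  unfolding feq_def fps_mult_nth by (auto intro!: sum.cong)

lemma Wr_compose:
  assumes s0: "s $ 0 = 0" and ds: "fps_deriv s = A oo s"
  shows "(A * Wr f g) oo s = Wr (f oo s) (g oo s)"
  unfolding Wr_def fps_compose_deriv[OF s0] ds
  by (simp add: fps_compose_mult_distrib[OF s0] fps_compose_sub_distrib algebra_simps)

lemma Wr_trunc1:
  assumes f0: "f $ 0 = 0" and h: "feq n g g2"
  shows "feq n (Wr f g) (Wr f g2)"
  unfolding feq_def
proof (intro allI impI)
  fix k assume k: "k \<le> n"
  define h where "h = g - g2"
  have hz: "h $ j = 0" if "j \<le> n" for j using h that unfolding feq_def h_def by simp
  have 1: "(f * fps_deriv h) $ k = 0"
    unfolding fps_mult_nth
  proof (rule sum.neutral, intro ballI)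
    fix i assume "i \<in> {0..k}"
    then show "f $ i * fps_deriv h $ (k - i) = 0"
      using f0 hz[of "k - i + 1"] k by (cases "i = 0") auto
  qed
  have 2: "(fps_deriv f * h) $ k = 0"
    unfolding fps_mult_nth using hz k by (intro sum.neutral) auto
  have "Wr f g - Wr f g2 = f * fps_deriv h - fps_deriv f * h"
    unfolding Wr_def h_def by (simp add: algebra_simps)
  then have "(Wr f g - Wr f g2) $ k = 0" using 1 2 by simp
  then show "Wr f g $ k = Wr f g2 $ k" by simp
qed

lemma Wr_antisym: "Wr f g = - Wr g f"
  unfolding Wr_def by (simp add: algebra_simps)

lemma Wr_trunc:
  assumes "f $ 0 = 0" "g2 $ 0 = 0" "feq n f f2" "feq n g g2"
  shows "feq n (Wr f g) (Wr f2 g2)"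
proof -
  have a: "feq n (Wr f g) (Wr f g2)" using Wr_trunc1 assms by blast
  have "feq n (Wr g2 f) (Wr g2 f2)" using Wr_trunc1 assms by blast
  then have b: "feq n (Wr f g2) (Wr f2 g2)" unfolding feq_def
    by (metis Wr_antisym fps_neg_nth)
  show ?thesis using a b unfolding feq_def by simp
qed

lemma exists_s:
  fixes A :: "complex fps"
  assumes A0: "A $ 0 \<noteq> 0"
  shows "\<exists>s r. s $ 0 = 0 \<and> r $ 0 = 0 \<and> fps_deriv s = A oo s \<and> s oo r = fps_X \<and> r oo s = fps_X"
proof -
  define r where "r = fps_integral0 (inverse A)"
  have r0: "r $ 0 = 0" unfolding r_def by simp
  have r1: "r $ 1 \<noteq> 0" using A0 unfolding r_def
    using fps_integral_nth_0_Suc(2)[of "inverse A" 0 0] by simp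
  define s where "s = fps_inv r"
  have s0: "s $ 0 = 0" unfolding s_def fps_inv_def by simp
  have dr: "fps_deriv r = inverse A" unfolding r_def by (rule fps_deriv_fps_integral)
  have "fps_deriv s = inverse (inverse A oo s)"
    unfolding s_def using fps_inv_deriv[OF r0 r1] dr by simp
  also have "\<dots> = A oo s" using fps_inverse_compose[OF s0 A0] fps_inverse_idempotent[of "A oo s"] A0 by simp
  finally show ?thesis using s0 r0 fps_inv[OF r0 r1] fps_inv_right[OF r0 r1] unfolding s_def
    by blast
qed

lemma Abs_sum:
  assumes "x \<in> carrierV n"
  shows "Abs_fps x = (\<Sum>i\<in>{1..n}. fps_const (x i) * fps_X ^ i)"
proof (rule fps_ext)
  fix k
  have "(\<Sum>i\<in>{1..n}. fps_const (x i) * fps_X ^ i) $ k = (\<Sum>i\<in>{1..n}. x i * (if k = i then 1 else 0))"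
    by (simp add: fps_sum_nth)
  also have "\<dots> = (\<Sum>i\<in>{1..n}. if i = k then x k else 0)" by (intro sum.cong) auto
  also have "\<dots> = x k" using assms by (simp add: carrierV_def)
  finally show "Abs_fps x $ k = (\<Sum>i\<in>{1..n}. fps_const (x i) * fps_X ^ i) $ k" by simp
qed

lemma mu0_fps:
  assumes x: "x \<in> carrierV n" and y: "y \<in> carrierV n" and t: "t \<le> n"
  shows "mu0_mult n x y t = (Abs_fps x * Abs_fps y) $ t"
proof -
  have "Abs_fps x * Abs_fps y = (\<Sum>i\<in>{1..n}. \<Sum>j\<in>{1..n}. fps_const (x i * y j) * fps_X ^ (i + j))"
    unfolding Abs_sum[OF x] Abs_sum[OF y] sum_product
    by (simp add: power_add algebra_simps flip: fps_const_mult)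
  then have "(Abs_fps x * Abs_fps y) $ t = (\<Sum>i\<in>{1..n}. \<Sum>j\<in>{1..n}. x i * y j * (if t = i + j then 1 else 0))"
    by (simp add: fps_sum_nth)
  then show ?thesis unfolding mu0_mult_def using t by (auto intro!: sum.cong)
qed

lemma mu0_carrier: "mu0_mult n x y \<in> carrierV n"
  unfolding carrierV_def mu0_mult_def by (auto intro!: sum.neutral)

lemma bracket_carrier: "TP_bracket n a x y \<in> carrierV n"
  unfolding carrierV_def TP_bracket_def by (auto intro!: sum.neutral)

lemma Wr_X_pow:
  assumes "i \<ge> 1" "j \<ge> 1"
  shows "Wr (fps_X ^ i) (fps_X ^ j) = fps_const (of_int (int j - int i)) * fps_X ^ (i + j - 1)"
proof (rule fps_ext)
  fix k
  have a: "((fps_X :: complex fps) ^ i * fps_deriv (fps_X ^ j)) $ k = (if k < i then 0 else of_nat (k - i + 1) * (if k - i + 1 = j then 1 else 0))"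
    by (simp add: fps_X_power_mult_nth)
  have b: "(fps_deriv ((fps_X :: complex fps) ^ i) * fps_X ^ j) $ k = (if k < j then 0 else of_nat (k - j + 1) * (if k - j + 1 = i then 1 else 0))"
  proof -
    have "fps_deriv ((fps_X :: complex fps) ^ i) * fps_X ^ j = fps_X ^ j * fps_deriv (fps_X ^ i)" by (rule mult.commute)
    show ?thesis unfolding \<open>fps_deriv ((fps_X :: complex fps) ^ i) * fps_X ^ j = fps_X ^ j * fps_deriv (fps_X ^ i)\<close> by (simp add: fps_X_power_mult_nth)
  qed
  show "Wr (fps_X ^ i) (fps_X ^ j) $ k = (fps_const (of_int (int j - int i)) * fps_X ^ (i + j - 1)) $ k"
    unfolding Wr_def fps_sub_nth a b using assms by auto
qed

lemma Wr_sum_left: "Wr (sum F I) g = (\<Sum>i\<in>I. Wr (F i) g)"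
  unfolding Wr_def fps_deriv_sum sum_distrib_right sum_subtractf ..

lemma Wr_sum_right: "Wr f (sum G J) = (\<Sum>j\<in>J. Wr f (G j))"
  unfolding Wr_def fps_deriv_sum sum_distrib_left sum_subtractf ..

lemma Wr_const_left: "Wr (fps_const c * f) g = fps_const c * Wr f g"
  unfolding Wr_def by (simp add: algebra_simps)

lemma Wr_const_right: "Wr f (fps_const c * g) = fps_const c * Wr f g"
  unfolding Wr_def by (simp add: algebra_simps)

definition Aof :: "(nat \<Rightarrow> complex) \<Rightarrow> complex fps" where
  "Aof a = Abs_fps (\<lambda>k. a (k + 2))"

lemma bracket_fps:
  assumes x: "x \<in> carrierV n" and y: "y \<in> carrierV n" and t: "t \<le> n"
  shows "TP_bracket n a x y t = (Aof a * Wr (Abs_fps x) (Abs_fps y)) $ t"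
proof -
  have "Aof a * Wr (Abs_fps x) (Abs_fps y) = (\<Sum>i\<in>{1..n}. \<Sum>j\<in>{1..n}.
          fps_const (x i * y j * of_int (int j - int i)) * (fps_X ^ (i + j - 1) * Aof a))"
    unfolding Abs_sum[OF x] Abs_sum[OF y] Wr_sum_left
    unfolding Wr_sum_right Wr_const_left Wr_const_right sum_distrib_left
  proof (intro sum.cong refl)
    fix i j assume i: "i \<in> {1..n}" and j: "j \<in> {1..n}"
    have "fps_const (y j) * (fps_const (x i) * Wr (fps_X ^ i) (fps_X ^ j)) =
      fps_const (x i * y j * of_int (int j - int i)) * fps_X ^ (i + j - 1)"
      using i j by (simp add: Wr_X_pow mult.assoc mult.left_commute)
    then show "Aof a * (fps_const (y j) * (fps_const (x i) * Wr (fps_X ^ i) (fps_X ^ j))) =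
         fps_const (x i * y j * of_int (int j - int i)) * (fps_X ^ (i + j - 1) * Aof a)"
      by (simp only: mult.assoc mult.commute mult.left_commute)
  qed
  then have "(Aof a * Wr (Abs_fps x) (Abs_fps y)) $ t = (\<Sum>i\<in>{1..n}. \<Sum>j\<in>{1..n}.
          x i * y j * of_int (int j - int i) * (if t < i + j - 1 then 0 else Aof a $ (t - (i + j - 1))))"
    by (simp add: fps_sum_nth fps_X_power_mult_nth) (auto intro!: sum.cong)
  also have "\<dots> = TP_bracket n a x y t"
    unfolding TP_bracket_def
  proof (intro sum.cong refl)
    fix i j assume i: "i \<in> {1..n}" and j: "j \<in> {1..n}"
    show "x i * y j * of_int (int j - int i) * (if t < i + j - 1 then 0 else Aof a $ (t - (i + j - 1))) =
      (if 3 \<le> i + j \<and> i + j \<le> n + 1 \<and> i + j - 1 \<le> t \<and> t \<le> n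
       then of_int (int j - int i) * a (t + 3 - (i + j)) * x i * y j else 0)"
    proof (cases "i + j = 2")
      case True then have "i = 1" "j = 1" using i j by auto
      then show ?thesis by simp
    next
      case False
      have e: "t - (i + j - 1) + 2 = t + 3 - (i + j)" if "i + j - 1 \<le> t" using that i j by auto
      show ?thesis using False i j t e by (auto simp: algebra_simps Aof_def)
    qed
  qed
  finally show ?thesis by simp
qed

definition Phi :: "nat \<Rightarrow> complex fps \<Rightarrow> (nat \<Rightarrow> complex) \<Rightarrow> (nat \<Rightarrow> complex)" where
  "Phi n s x = (\<lambda>t. if t \<in> {1..n} then (Abs_fps x oo s) $ t else 0)"

lemma Phi_carrier: "Phi n s x \<in> carrierV n"
  unfolding carrierV_def Phi_def by auto

lemma carrier0: "x \<in> carrierV n \<Longrightarrow> x 0 = 0"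
  unfolding carrierV_def by auto

lemma feq_sym: "feq n f g \<Longrightarrow> feq n g f"
  unfolding feq_def by auto

lemma feq_trans: "feq n f g \<Longrightarrow> feq n g h \<Longrightarrow> feq n f h"
  unfolding feq_def by auto

lemma Phi_feq: "x 0 = 0 \<Longrightarrow> feq n (Abs_fps (Phi n s x)) (Abs_fps x oo s)"
  unfolding feq_def Phi_def apply (intro allI impI) apply (case_tac "k = 0") by auto

lemma Phi_feq': "x \<in> carrierV n \<Longrightarrow> feq n (Abs_fps (Phi n s x)) (Abs_fps x oo s)"
  using Phi_feq carrier0 by blast

lemma Phi_cong: "feq n (Abs_fps x) g \<Longrightarrow> Phi n s x = (\<lambda>t. if t \<in> {1..n} then (g oo s) $ t else 0)"
  using feq_compose[of n "Abs_fps x" g s] unfolding Phi_def feq_def by (auto intro!: ext)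

lemma Phi_inv:
  assumes s0: "s $ 0 = 0" and r0: "r $ 0 = 0" and sr: "s oo r = fps_X" and x: "x \<in> carrierV n"
  shows "Phi n r (Phi n s x) = x"
proof -
  have "Phi n r (Phi n s x) = (\<lambda>t. if t \<in> {1..n} then ((Abs_fps x oo s) oo r) $ t else 0)"
    by (rule Phi_cong[OF Phi_feq'[OF x]])
  also have "(Abs_fps x oo s) oo r = Abs_fps x"
    using fps_compose_assoc[OF r0 s0, of "Abs_fps x"] sr by simp
  finally show ?thesis using x unfolding carrierV_def by auto
qed

lemma mu0_feq: "x \<in> carrierV n \<Longrightarrow> y \<in> carrierV n \<Longrightarrow>
   feq n (Abs_fps (mu0_mult n x y)) (Abs_fps x * Abs_fps y)"
  unfolding feq_def using mu0_fps by auto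

lemma bracket_feq: "x \<in> carrierV n \<Longrightarrow> y \<in> carrierV n \<Longrightarrow>
   feq n (Abs_fps (TP_bracket n a x y)) (Aof a * Wr (Abs_fps x) (Abs_fps y))"
  unfolding feq_def using bracket_fps by auto

lemma outside0: "z \<in> carrierV n \<Longrightarrow> t \<notin> {1..n} \<Longrightarrow> z t = 0"
  unfolding carrierV_def by auto

theorem mainTheorem7:
  fixes n :: nat and \<alpha> :: "nat \<Rightarrow> complex"
  assumes "n \<ge> 2" and "\<alpha> 2 \<noteq> 0"
  shows "TP_isomorphic n \<alpha> (\<lambda>k. if k = 2 then 1 else 0)"
proof -
  have "Aof \<alpha> $ 0 \<noteq> 0" using assms(2) by (simp add: Aof_def numeral_2_eq_2)
  then obtain s r where s0: "s $ 0 = 0" and r0: "r $ 0 = 0" and ds: "fps_deriv s = Aof \<alpha> oo s"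
    and sr: "s oo r = fps_X" and rs: "r oo s = fps_X"
    using exists_s by blast
  define \<beta> :: "nat \<Rightarrow> complex" where "\<beta> = (\<lambda>k. if k = 2 then 1 else 0)"
  have A\<beta>: "Aof \<beta> = 1"
    by (rule fps_ext) (simp add: Aof_def \<beta>_def)
  let ?F = "Phi n s"
  have bij: "bij_betw ?F (carrierV n) (carrierV n)"
    by (rule bij_betw_byWitness[where f' = "Phi n r"])
      (auto simp: Phi_inv[OF s0 r0 sr] Phi_inv[OF r0 s0 rs] Phi_carrier)
  have add: "?F (\<lambda>t. x t + y t) = (\<lambda>t. ?F x t + ?F y t)" for x y
  proof -
    have "Abs_fps (\<lambda>t. x t + y t) = Abs_fps x + Abs_fps y" by (rule fps_ext) simp
    then show ?thesis unfolding Phi_def by (auto simp: fps_compose_add_distrib)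
  qed
  have smul: "?F (\<lambda>t. c * x t) = (\<lambda>t. c * ?F x t)" for c x
  proof -
    have "Abs_fps (\<lambda>t. c * x t) = fps_const c * Abs_fps x" by (rule fps_ext) simp
    then show ?thesis unfolding Phi_def by (auto simp: fps_compose_mult_distrib[OF s0])
  qed
  have mul: "?F (mu0_mult n x y) = mu0_mult n (?F x) (?F y)" if x: "x \<in> carrierV n" and y: "y \<in> carrierV n" for x y
  proof (rule ext)
    fix t
    show "?F (mu0_mult n x y) t = mu0_mult n (?F x) (?F y) t"
    proof (cases "t \<in> {1..n}")
      case True
      have "?F (mu0_mult n x y) t = ((Abs_fps x * Abs_fps y) oo s) $ t"
        using Phi_cong[OF mu0_feq[OF x y], of s] True by simp
      also have "\<dots> = ((Abs_fps x oo s) * (Abs_fps y oo s)) $ t"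
        by (simp add: fps_compose_mult_distrib[OF s0])
      also have "\<dots> = (Abs_fps (?F x) * Abs_fps (?F y)) $ t"
        using feq_mult[OF feq_sym[OF Phi_feq'[OF x]] feq_sym[OF Phi_feq'[OF y]]]
          True unfolding feq_def by auto
      also have "\<dots> = mu0_mult n (?F x) (?F y) t"
        using mu0_fps[OF Phi_carrier Phi_carrier] True by simp
      finally show ?thesis .
    next
      case False
      then show ?thesis using outside0[OF mu0_carrier] by (auto simp: Phi_def)
    qed
  qed
  have br: "?F (TP_bracket n \<alpha> x y) = TP_bracket n \<beta> (?F x) (?F y)" if x: "x \<in> carrierV n" and y: "y \<in> carrierV n" for x y
  proof (rule ext)
    fix t
    show "?F (TP_bracket n \<alpha> x y) t = TP_bracket n \<beta> (?F x) (?F y) t"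
    proof (cases "t \<in> {1..n}")
      case True
      have "?F (TP_bracket n \<alpha> x y) t = ((Aof \<alpha> * Wr (Abs_fps x) (Abs_fps y)) oo s) $ t"
        using Phi_cong[OF bracket_feq[OF x y], of s] True by simp
      also have "\<dots> = Wr (Abs_fps x oo s) (Abs_fps y oo s) $ t"
        by (simp add: Wr_compose[OF s0 ds])
      also have "\<dots> = Wr (Abs_fps (?F x)) (Abs_fps (?F y)) $ t"
      proof -
        have "feq n (Wr (Abs_fps x oo s) (Abs_fps y oo s)) (Wr (Abs_fps (?F x)) (Abs_fps (?F y)))"
        proof -
          have f1: "feq n (Abs_fps x oo s) (Abs_fps (?F x))" by (rule feq_sym[OF Phi_feq'[OF x]])
          have f2: "feq n (Abs_fps y oo s) (Abs_fps (?F y))" by (rule feq_sym[OF Phi_feq'[OF y]])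
          have g0: "Abs_fps (?F y) $ 0 = 0" by (simp add: Phi_def)
          have f0: "(Abs_fps x oo s) $ 0 = 0" using carrier0[OF x] by simp
          show ?thesis by (rule Wr_trunc[OF f0 g0 f1 f2])
        qed
        then show ?thesis using True unfolding feq_def by auto
      qed
      also have "\<dots> = TP_bracket n \<beta> (?F x) (?F y) t"
        using bracket_fps[OF Phi_carrier Phi_carrier, of t n \<beta>] True A\<beta> by simp
      finally show ?thesis .
    next
      case False
      then show ?thesis using outside0[OF bracket_carrier] by (auto simp: Phi_def)
    qed
  qed
  have "TP_iso n \<alpha> \<beta> ?F"
    unfolding TP_iso_def using bij add smul mul br by blast
  then show ?thesis unfolding TP_isomorphic_def \<beta>_def by blast
qed

end
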